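(* Let $X,Y$ be Banach spaces and let $-A$ be the generator of a bounded strongly continuous semigroup $(T(t))_{t\ge0}$ on $X$; assume $A$ is injective and has dense range. Let $C:\mathcal D(A)\to Y$ be bounded (for the graph norm). Suppose there exist $\beta\in(0,1)$ and constants $K,\delta>0$ such that (SQ$_\beta$) $\|x\|^2\le K^2\int_0^\infty\|(tA)^{-\beta}(T(2t^{2\beta})-T(t^{2\beta}))x\|^2\,\frac{dt}{t}$ for all $x\in X$, and (R$_\beta$) $\|CA^{-(1-\beta)}x\|_Y\ge\delta\|x\|$ for all $x\in\mathcal D(A)\cap\mathcal R(A)$ (understood as $\|CA^{-1}x\|_Y\ge\delta\|A^{-\beta}x\|$). Then there exists a constant $m>0$ such that $m^2\|x\|^2\le\int_0^\infty\|CT(t)x\|_Y^2\,dt$ for all $x\in\mathcal D(A)\cap\mathcal R(A)$.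
   Context: $\mathcal D(A)$, $\mathcal R(A)$ denote domain and range of $A$. Since $-A$ generates a bounded semigroup, $A$ is sectorial and, being injective, has fractional powers $A^{-\gamma}$ ($\gamma\in(0,1]$), the inverses of the fractional powers $A^{\gamma}$; $(tA)^{-\beta}=t^{-\beta}A^{-\beta}$. *)

theory Defs
  imports "HOL-Analysis.Analysis"
begin

definition C0_semigroup :: "(real \<Rightarrow> 'a::banach \<Rightarrow> 'a) \<Rightarrow> bool" where
  "C0_semigroup T \<longleftrightarrow>
     (\<forall>t\<ge>0. bounded_linear (T t)) \<and>
     T 0 = id \<and>
     (\<forall>s t. 0 \<le> s \<longrightarrow> 0 \<le> t \<longrightarrow> T (s + t) = T s \<circ> T t) \<and>
     (\<forall>x. continuous_on {0..} (\<lambda>t. T t x))"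

definition bounded_semigroup :: "(real \<Rightarrow> 'a::banach \<Rightarrow> 'a) \<Rightarrow> bool" where
  "bounded_semigroup T \<longleftrightarrow> C0_semigroup T \<and> (\<exists>M. \<forall>t\<ge>0. onorm (T t) \<le> M)"

definition is_generator :: "(real \<Rightarrow> 'a::banach \<Rightarrow> 'a) \<Rightarrow> 'a set \<Rightarrow> ('a \<Rightarrow> 'a) \<Rightarrow> bool" where
  "is_generator T D G \<longleftrightarrow>
     D = {x. \<exists>y. ((\<lambda>h. (1 / h) *\<^sub>R (T h x - x)) \<longlongrightarrow> y) (at_right 0)} \<and>
     (\<forall>x\<in>D. ((\<lambda>h. (1 / h) *\<^sub>R (T h x - x)) \<longlongrightarrow> G x) (at_right 0))"

text \<open>Negative fractional power A^(-beta) of A, where -A generates the bounded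
  semigroup T, via the standard formula
  A^(-beta) y = 1/Gamma(beta) * int_0^infty t^(beta-1) T(t) y dt
  (improper integral at infinity; valid in particular on the range of A).\<close>
definition frac_neg_pow :: "(real \<Rightarrow> 'a::banach \<Rightarrow> 'a) \<Rightarrow> real \<Rightarrow> 'a \<Rightarrow> 'a" where
  "frac_neg_pow T \<beta> y =
     (1 / Gamma \<beta>) *\<^sub>R
       Lim at_top (\<lambda>R::real. integral {0..R} (\<lambda>t. (t powr (\<beta> - 1)) *\<^sub>R T t y))"

definition graph_bounded :: "'a::banach set \<Rightarrow> ('a \<Rightarrow> 'a) \<Rightarrow> ('a \<Rightarrow> 'b::banach) \<Rightarrow> bool" where
  "graph_bounded D A C \<longleftrightarrow>
     (\<forall>x\<in>D. \<forall>y\<in>D. \<forall>a b. C (a *\<^sub>R x + b *\<^sub>R y) = a *\<^sub>R C x + b *\<^sub>R C y) \<and>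
     (\<exists>c. \<forall>x\<in>D. norm (C x) \<le> c * (norm x + norm (A x)))"

end

theory Submission
  imports Defs
begin


lemma sg_basic:
  assumes "bounded_semigroup T"
  shows "\<And>t. t \<ge> 0 \<Longrightarrow> bounded_linear (T t)" "T 0 = id"
    "\<And>s t. 0 \<le> s \<Longrightarrow> 0 \<le> t \<Longrightarrow> T (s + t) x = T s (T t x)"
    "\<And>x. continuous_on {0..} (\<lambda>t. T t x)"
  using assms unfolding bounded_semigroup_def C0_semigroup_def by auto

lemma sg_bound:
  assumes "bounded_semigroup T"
  obtains M where "M \<ge> 0" "\<And>t v. t \<ge> 0 \<Longrightarrow> norm (T t v) \<le> M * norm v"
proof -
  from assms obtain M where M: "\<forall>t\<ge>0. onorm (T t) \<le> M"
    unfolding bounded_semigroup_def by auto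
  have bl: "\<And>t. t \<ge> 0 \<Longrightarrow> bounded_linear (T t)" using sg_basic[OF assms] by auto
  show ?thesis
  proof (rule that[of "max M 0"])
    fix t v assume t: "(t::real) \<ge> 0"
    have "norm (T t v) \<le> onorm (T t) * norm v" by (rule onorm[OF bl[OF t]])
    also have "\<dots> \<le> max M 0 * norm v" using M t by (intro mult_right_mono) auto
    finally show "norm (T t v) \<le> max M 0 * norm v" .
  qed auto
qed

lemma gen_lim:
  assumes "is_generator T D (\<lambda>x. - A x)" "x \<in> D"
  shows "((\<lambda>h. (1 / h) *\<^sub>R (T h x - x)) \<longlongrightarrow> - A x) (at_right 0)"
  using assms unfolding is_generator_def by auto

lemma gen_intro:
  assumes "is_generator T D (\<lambda>x. - A x)"
    and "((\<lambda>h. (1 / h) *\<^sub>R (T h x - x)) \<longlongrightarrow> y) (at_right 0)"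
  shows "x \<in> D" "A x = - y"
proof -
  show xD: "x \<in> D" using assms unfolding is_generator_def by auto
  have "((\<lambda>h. (1 / h) *\<^sub>R (T h x - x)) \<longlongrightarrow> - A x) (at_right 0)"
    using gen_lim[OF assms(1) xD] .
  from tendsto_unique[OF _ this assms(2)] show "A x = - y" by (metis minus_minus trivial_limit_at_right_real)
qed

lemma ev_pos: "eventually (\<lambda>h::real. h > 0) (at_right 0)"
  by (simp add: eventually_at_right_less)

lemma D_lin:
  assumes sg: "bounded_semigroup T" and gen: "is_generator T D (\<lambda>x. - A x)"
    and x: "x \<in> D" and y: "y \<in> D"
  shows "a *\<^sub>R x + b *\<^sub>R y \<in> D" "A (a *\<^sub>R x + b *\<^sub>R y) = a *\<^sub>R A x + b *\<^sub>R A y"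
proof -
  have lim: "((\<lambda>h. a *\<^sub>R ((1 / h) *\<^sub>R (T h x - x)) + b *\<^sub>R ((1 / h) *\<^sub>R (T h y - y)))
      \<longlongrightarrow> a *\<^sub>R (- A x) + b *\<^sub>R (- A y)) (at_right 0)"
    by (intro tendsto_intros gen_lim[OF gen x] gen_lim[OF gen y])
  have ev: "eventually (\<lambda>h. a *\<^sub>R ((1 / h) *\<^sub>R (T h x - x)) + b *\<^sub>R ((1 / h) *\<^sub>R (T h y - y))
      = (1 / h) *\<^sub>R (T h (a *\<^sub>R x + b *\<^sub>R y) - (a *\<^sub>R x + b *\<^sub>R y))) (at_right 0)"
    using ev_pos
  proof eventually_elim
    case (elim h)
    then interpret bounded_linear "T h" using sg_basic(1)[OF sg, of h] by simp
    show ?case by (simp add: add scale algebra_simps)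
  qed
  have lim2: "((\<lambda>h. (1 / h) *\<^sub>R (T h (a *\<^sub>R x + b *\<^sub>R y) - (a *\<^sub>R x + b *\<^sub>R y)))
      \<longlongrightarrow> a *\<^sub>R (- A x) + b *\<^sub>R (- A y)) (at_right 0)"
    using tendsto_cong[OF ev] lim by simp
  show "a *\<^sub>R x + b *\<^sub>R y \<in> D" using gen_intro[OF gen lim2] by simp
  show "A (a *\<^sub>R x + b *\<^sub>R y) = a *\<^sub>R A x + b *\<^sub>R A y" using gen_intro[OF gen lim2] by simp
qed

lemma T_D:
  assumes sg: "bounded_semigroup T" and gen: "is_generator T D (\<lambda>x. - A x)"
    and x: "x \<in> D" and t: "t \<ge> 0"
  shows "T t x \<in> D" "A (T t x) = T t (A x)"
proof -
  interpret L: bounded_linear "T t" using sg_basic(1)[OF sg t] .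
  have lim: "((\<lambda>h. T t ((1 / h) *\<^sub>R (T h x - x))) \<longlongrightarrow> T t (- A x)) (at_right 0)"
    by (rule L.tendsto[OF gen_lim[OF gen x]])
  have ev: "eventually (\<lambda>h. T t ((1 / h) *\<^sub>R (T h x - x))
      = (1 / h) *\<^sub>R (T h (T t x) - T t x)) (at_right 0)"
    using ev_pos
  proof eventually_elim
    case (elim h)
    have "T h (T t x) = T t (T h x)"
      using sg_basic(3)[OF sg, of h t x] sg_basic(3)[OF sg, of t h x] elim t by (simp add: add.commute)
    then show ?case by (simp add: L.scale L.diff)
  qed
  have lim2: "((\<lambda>h. (1 / h) *\<^sub>R (T h (T t x) - T t x)) \<longlongrightarrow> T t (- A x)) (at_right 0)"
    using tendsto_cong[OF ev] lim by simp
  show "T t x \<in> D" using gen_intro[OF gen lim2] by simp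
  show "A (T t x) = T t (A x)" using gen_intro[OF gen lim2] by (simp add: L.neg)
qed



lemma vd_quot:
  fixes f :: "real \<Rightarrow> 'a::real_normed_vector"
  assumes "((\<lambda>y. (1 / (y - x)) *\<^sub>R (f y - f x)) \<longlongrightarrow> f') (at x within S)"
  shows "(f has_vector_derivative f') (at x within S)"
  unfolding has_vector_derivative_def has_derivative_within
proof
  show "bounded_linear (\<lambda>h. h *\<^sub>R f')" by (rule bounded_linear_scaleR_left)
  have z: "((\<lambda>y. (1 / (y - x)) *\<^sub>R (f y - f x) - f') \<longlongrightarrow> 0) (at x within S)"
    using tendsto_diff[OF assms tendsto_const[of f']] by simp
  have ev: "eventually (\<lambda>y. y \<noteq> x) (at x within S)" by (simp add: eventually_at_filter)
  show "((\<lambda>y. (1 / norm (y - x)) *\<^sub>R (f y - (f x + (y - x) *\<^sub>R f'))) \<longlongrightarrow> 0) (at x within S)"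
  proof (rule tendsto_0_le[OF z, where K=1])
    show "\<forall>\<^sub>F y in at x within S. norm ((1 / norm (y - x)) *\<^sub>R (f y - (f x + (y - x) *\<^sub>R f')))
        \<le> norm ((1 / (y - x)) *\<^sub>R (f y - f x) - f') * 1"
      using ev
    proof eventually_elim
      case (elim y)
      have e: "(1 / (y - x)) *\<^sub>R ((y - x) *\<^sub>R f') = f'" using elim by simp
      have "(1 / (y - x)) *\<^sub>R (f y - (f x + (y - x) *\<^sub>R f'))
          = (1 / (y - x)) *\<^sub>R (f y - f x) - (1 / (y - x)) *\<^sub>R ((y - x) *\<^sub>R f')"
        by (simp only: scaleR_diff_right scaleR_add_right diff_diff_eq)
      then have "(1 / (y - x)) *\<^sub>R (f y - f x) - f' = (1 / (y - x)) *\<^sub>R (f y - (f x + (y - x) *\<^sub>R f'))"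
        using e by simp
      then show ?case by simp
    qed
  qed
qed

lemma T_deriv:
  assumes sg: "bounded_semigroup T" and gen: "is_generator T D (\<lambda>x. - A x)"
    and x: "x \<in> D" and u: "u > 0"
  shows "((\<lambda>v. T v x) has_vector_derivative - T u (A x)) (at u)"
proof (rule vd_quot, rule LIM_offset_zero_cancel)
  interpret L: bounded_linear "T u" using sg_basic(1)[OF sg] u by simp
  obtain M where M: "M \<ge> 0" "\<And>t v. t \<ge> 0 \<Longrightarrow> norm (T t v) \<le> M * norm v"
    using sg_bound[OF sg] by blast
  let ?q = "\<lambda>h. (1 / h) *\<^sub>R (T h x - x)"
  have q: "(?q \<longlongrightarrow> - A x) (at_right 0)" by (rule gen_lim[OF gen x])
  have R: "((\<lambda>h. (1 / (u + h - u)) *\<^sub>R (T (u + h) x - T u x)) \<longlongrightarrow> - T u (A x)) (at_right 0)"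
  proof -
    have "((\<lambda>h. T u (?q h)) \<longlongrightarrow> T u (- A x)) (at_right 0)" by (rule L.tendsto[OF q])
    moreover have "eventually (\<lambda>h. T u (?q h) = (1 / (u + h - u)) *\<^sub>R (T (u + h) x - T u x)) (at_right 0)"
      using ev_pos
    proof eventually_elim
      case (elim h)
      then show ?case using sg_basic(3)[OF sg, of u h x] u by (simp add: L.scale L.diff)
    qed
    ultimately show ?thesis using tendsto_cong by (fastforce simp: L.neg)
  qed
  have Lf: "((\<lambda>h. (1 / (u + - h - u)) *\<^sub>R (T (u + - h) x - T u x)) \<longlongrightarrow> - T u (A x)) (at_right 0)"
  proof -
    have c1: "((\<lambda>t. T t (- A x)) \<longlongrightarrow> T u (- A x)) (at u within {0..})"
      using sg_basic(4)[OF sg, of "- A x"] u by (simp add: continuous_on_def)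
    have f1: "filterlim (\<lambda>h. u - h) (at u within {0..}) (at_right 0)"
      unfolding filterlim_at
    proof
      have "eventually (\<lambda>h::real. h < u) (at_right 0)" using u by (auto simp: eventually_at_right intro!: exI[of _ u])
      then show "\<forall>\<^sub>F h in at_right 0. u - h \<in> {0..} \<and> u - h \<noteq> u"
        using ev_pos by eventually_elim auto
      have "((\<lambda>h. u - h) \<longlongrightarrow> u - 0) (at_right (0::real))" by (intro tendsto_intros)
      then show "((\<lambda>h. u - h) \<longlongrightarrow> u) (at_right 0)" by simp
    qed
    have t1: "((\<lambda>h. T (u - h) (- A x)) \<longlongrightarrow> T u (- A x)) (at_right 0)"
      using tendsto_compose_filtermap filterlim_compose[OF c1 f1] by simp
    have z: "((\<lambda>h. ?q h - - A x) \<longlongrightarrow> 0) (at_right 0)"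
      using tendsto_diff[OF q tendsto_const[of "- A x"]] by simp
    have evu: "eventually (\<lambda>h::real. h < u) (at_right 0)" using u by (auto simp: eventually_at_right intro!: exI[of _ u])
    have t2: "((\<lambda>h. T (u - h) (?q h - - A x)) \<longlongrightarrow> 0) (at_right 0)"
    proof (rule tendsto_0_le[OF z, where K=M])
      show "\<forall>\<^sub>F h in at_right 0. norm (T (u - h) (?q h - - A x)) \<le> norm (?q h - - A x) * M"
        using evu by eventually_elim (use M in \<open>auto simp: mult.commute\<close>)
    qed
    have "((\<lambda>h. T (u - h) (- A x) + T (u - h) (?q h - - A x)) \<longlongrightarrow> T u (- A x) + 0) (at_right 0)"
      by (intro tendsto_add t1 t2)
    moreover have "eventually (\<lambda>h. T (u - h) (- A x) + T (u - h) (?q h - - A x)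
        = (1 / (u + - h - u)) *\<^sub>R (T (u + - h) x - T u x)) (at_right 0)"
      using ev_pos evu
    proof eventually_elim
      case (elim h)
      interpret L2: bounded_linear "T (u - h)" using sg_basic(1)[OF sg, of "u - h"] elim by simp
      have "T u x = T (u - h) (T h x)" using sg_basic(3)[OF sg, of "u - h" h x] elim by simp
      then have "(1 / (u + - h - u)) *\<^sub>R (T (u + - h) x - T u x) = T (u - h) (?q h)"
        using elim by (simp add: L2.scale L2.diff algebra_simps)
      also have "\<dots> = T (u - h) (- A x) + T (u - h) (?q h - - A x)"
        by (simp add: L2.add[symmetric])
      finally show ?case by simp
    qed
    ultimately show ?thesis using tendsto_cong by (fastforce simp: L.neg)
  qed
  show "((\<lambda>h. (1 / (u + h - u)) *\<^sub>R (T (u + h) x - T u x)) \<longlongrightarrow> - T u (A x)) (at 0)"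
    unfolding filterlim_at_split
    using R Lf by (simp add: filterlim_at_left_to_right)
qed



lemma quot_vd:
  fixes f :: "real \<Rightarrow> 'a::real_normed_vector"
  assumes "(f has_vector_derivative f') (at x within S)"
  shows "((\<lambda>y. (1 / (y - x)) *\<^sub>R (f y - f x)) \<longlongrightarrow> f') (at x within S)"
proof -
  have r: "((\<lambda>y. (1 / norm (y - x)) *\<^sub>R (f y - (f x + (y - x) *\<^sub>R f'))) \<longlongrightarrow> 0) (at x within S)"
    using assms unfolding has_vector_derivative_def has_derivative_within by auto
  have ev: "eventually (\<lambda>y. y \<noteq> x) (at x within S)" by (simp add: eventually_at_filter)
  have "((\<lambda>y. (1 / (y - x)) *\<^sub>R (f y - f x) - f') \<longlongrightarrow> 0) (at x within S)"
  proof (rule tendsto_0_le[OF r, where K=1])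
    show "\<forall>\<^sub>F y in at x within S. norm ((1 / (y - x)) *\<^sub>R (f y - f x) - f')
        \<le> norm ((1 / norm (y - x)) *\<^sub>R (f y - (f x + (y - x) *\<^sub>R f'))) * 1"
      using ev
    proof eventually_elim
      case (elim y)
      have e: "(1 / (y - x)) *\<^sub>R ((y - x) *\<^sub>R f') = f'" using elim by simp
      have "(1 / (y - x)) *\<^sub>R (f y - (f x + (y - x) *\<^sub>R f'))
          = (1 / (y - x)) *\<^sub>R (f y - f x) - (1 / (y - x)) *\<^sub>R ((y - x) *\<^sub>R f')"
        by (simp only: scaleR_diff_right scaleR_add_right diff_diff_eq)
      then have "(1 / (y - x)) *\<^sub>R (f y - f x) - f' = (1 / (y - x)) *\<^sub>R (f y - (f x + (y - x) *\<^sub>R f'))"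
        using e by simp
      then show ?case by simp
    qed
  qed
  from tendsto_add[OF this tendsto_const[of f']] show ?thesis by simp
qed

lemma quot_right:
  fixes f :: "real \<Rightarrow> 'a::real_normed_vector"
  assumes "(f has_vector_derivative f') (at x within S)"
    and "eventually (\<lambda>h. x + h \<in> S) (at_right 0)"
  shows "((\<lambda>h. (1 / h) *\<^sub>R (f (x + h) - f x)) \<longlongrightarrow> f') (at_right 0)"
proof -
  have fl: "filterlim (\<lambda>h. x + h) (at x within S) (at_right 0)"
    unfolding filterlim_at
  proof
    show "\<forall>\<^sub>F h in at_right 0. x + h \<in> S \<and> x + h \<noteq> x"
      using assms(2) ev_pos by eventually_elim auto
    have "((\<lambda>h. x + h) \<longlongrightarrow> x + 0) (at_right (0::real))" by (intro tendsto_intros)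
    then show "((\<lambda>h. x + h) \<longlongrightarrow> x) (at_right 0)" by simp
  qed
  from filterlim_compose[OF quot_vd[OF assms(1)] fl] show ?thesis by simp
qed

lemma int_gen:
  assumes sg: "bounded_semigroup T" and gen: "is_generator T D (\<lambda>x. - A x)"
    and ab: "0 \<le> a" "a \<le> b"
  shows "integral {a..b} (\<lambda>r. T r y) \<in> D"
    "A (integral {a..b} (\<lambda>r. T r y)) = T a y - T b y"
proof -
  define g where "g = (\<lambda>r. T r y)"
  define w where "w = integral {a..b} g"
  define L where "L = b + 1"
  define \<Phi> where "\<Phi> = (\<lambda>v. integral {0..v} g)"
  have cg: "continuous_on {0..L} g"
    unfolding g_def using sg_basic(4)[OF sg, of y] by (rule continuous_on_subset) auto
  have dPhi: "\<And>v. v \<in> {0..L} \<Longrightarrow> (\<Phi> has_vector_derivative g v) (at v within {0..L})"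
    unfolding \<Phi>_def by (rule integral_has_vector_derivative[OF cg])
  have igr: "\<And>p q. 0 \<le> p \<Longrightarrow> p \<le> q \<Longrightarrow> q \<le> L \<Longrightarrow> integral {p..q} g = \<Phi> q - \<Phi> p"
  proof -
    fix p q :: real assume pq: "0 \<le> p" "p \<le> q" "q \<le> L"
    have "g integrable_on {0..q}"
      by (rule integrable_continuous_real, rule continuous_on_subset[OF cg]) (use pq in auto)
    from Henstock_Kurzweil_Integration.integral_combine[OF pq(1,2) this] show "integral {p..q} g = \<Phi> q - \<Phi> p"
      unfolding \<Phi>_def by (simp add: algebra_simps)
  qed
  have evs: "eventually (\<lambda>h::real. h < 1) (at_right 0)"
    using order_tendstoD(2)[OF tendsto_ident_at[of "0::real" "{0<..}"], of 1] by simp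
  have ev: "eventually (\<lambda>h. (1 / h) *\<^sub>R (\<Phi> (b + h) - \<Phi> b) - (1 / h) *\<^sub>R (\<Phi> (a + h) - \<Phi> a)
      = (1 / h) *\<^sub>R (T h w - w)) (at_right 0)"
    using ev_pos evs
  proof eventually_elim
    case (elim h)
    interpret Lh: bounded_linear "T h" using sg_basic(1)[OF sg, of h] elim by simp
    have gi: "g integrable_on {a..b}"
      by (rule integrable_continuous_real, rule continuous_on_subset[OF cg]) (use ab in \<open>auto simp: L_def\<close>)
    have "T h w = integral {a..b} (T h \<circ> g)"
      unfolding w_def by (rule integral_linear[OF gi Lh.bounded_linear, symmetric])
    also have "\<dots> = integral {a..b} (g \<circ> (+) h)"
      by (rule integral_cong) (use ab elim sg_basic(3)[OF sg] in \<open>auto simp: g_def\<close>)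
    also have "\<dots> = integral {a + h..b + h} g" by (rule integral_shift_Icc_real)
    also have "\<dots> = \<Phi> (b + h) - \<Phi> (a + h)" by (rule igr) (use ab elim in \<open>auto simp: L_def\<close>)
    finally have Th: "T h w = \<Phi> (b + h) - \<Phi> (a + h)" .
    have w: "w = \<Phi> b - \<Phi> a" unfolding w_def by (rule igr) (use ab in \<open>auto simp: L_def\<close>)
    show ?case unfolding Th by (simp add: w algebra_simps scaleR_diff_right)
  qed
  have evb: "\<And>c. 0 \<le> c \<Longrightarrow> c \<le> b \<Longrightarrow> eventually (\<lambda>h. c + h \<in> {0..L}) (at_right 0)"
  proof -
    fix c :: real assume c: "0 \<le> c" "c \<le> b"
    show "eventually (\<lambda>h. c + h \<in> {0..L}) (at_right 0)"
      using ev_pos evs by eventually_elim (use c in \<open>auto simp: L_def\<close>)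
  qed
  have lim: "((\<lambda>h. (1 / h) *\<^sub>R (\<Phi> (b + h) - \<Phi> b) - (1 / h) *\<^sub>R (\<Phi> (a + h) - \<Phi> a))
      \<longlongrightarrow> g b - g a) (at_right 0)"
    by (intro tendsto_diff quot_right[OF dPhi evb]) (use ab in \<open>auto simp: L_def\<close>)
  have lim2: "((\<lambda>h. (1 / h) *\<^sub>R (T h w - w)) \<longlongrightarrow> g b - g a) (at_right 0)"
    using tendsto_cong[OF ev] lim by simp
  show "integral {a..b} (\<lambda>r. T r y) \<in> D" using gen_intro(1)[OF gen lim2] by (simp add: w_def g_def)
  show "A (integral {a..b} (\<lambda>r. T r y)) = T a y - T b y"
    using gen_intro(2)[OF gen lim2] by (simp add: w_def g_def)
qed



lemma D_diff:
  assumes sg: "bounded_semigroup T" and gen: "is_generator T D (\<lambda>x. - A x)"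
    and x: "x \<in> D" and y: "y \<in> D"
  shows "x - y \<in> D" "A (x - y) = A x - A y"
  using D_lin[OF sg gen x y, of 1 "-1"] by simp_all

lemma D_scale:
  assumes sg: "bounded_semigroup T" and gen: "is_generator T D (\<lambda>x. - A x)"
    and x: "x \<in> D"
  shows "c *\<^sub>R x \<in> D" "A (c *\<^sub>R x) = c *\<^sub>R A x"
  using D_lin[OF sg gen x x, of c 0] by simp_all

lemma C_diff:
  fixes C :: "'a::real_vector \<Rightarrow> 'b::real_vector"
  assumes Clin: "\<forall>x\<in>D. \<forall>y\<in>D. \<forall>a b. C (a *\<^sub>R x + b *\<^sub>R y) = a *\<^sub>R C x + b *\<^sub>R C y"
    and x: "x \<in> D" and y: "y \<in> D"
  shows "C (x - y) = C x - C y"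
proof -
  have "C (1 *\<^sub>R x + (-1) *\<^sub>R y) = 1 *\<^sub>R C x + (-1) *\<^sub>R C y" using Clin x y by blast
  then show ?thesis by simp
qed

lemma C_scale:
  fixes C :: "'a::real_vector \<Rightarrow> 'b::real_vector"
  assumes Clin: "\<forall>x\<in>D. \<forall>y\<in>D. \<forall>a b. C (a *\<^sub>R x + b *\<^sub>R y) = a *\<^sub>R C x + b *\<^sub>R C y"
    and x: "x \<in> D"
  shows "C (c *\<^sub>R x) = c *\<^sub>R C x"
proof -
  have "C (c *\<^sub>R x + 0 *\<^sub>R x) = c *\<^sub>R C x + 0 *\<^sub>R C x" using Clin x by blast
  then show ?thesis by simp
qed

lemma C_int:
  fixes C :: "'a::banach \<Rightarrow> 'b::banach"
  assumes sg: "bounded_semigroup T" and gen: "is_generator T D (\<lambda>x. - A x)"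
    and Clin: "\<forall>x\<in>D. \<forall>y\<in>D. \<forall>a b. C (a *\<^sub>R x + b *\<^sub>R y) = a *\<^sub>R C x + b *\<^sub>R C y"
    and Cbd: "\<forall>x\<in>D. norm (C x) \<le> c * (norm x + norm (A x))"
    and x: "x \<in> D" and ab: "0 < a" "a \<le> b"
  shows "((\<lambda>r. C (T r x)) has_integral C (integral {a..b} (\<lambda>r. T r x))) {a..b}"
proof -
  define F where "F = (\<lambda>v. integral {a..v} (\<lambda>r. T r x))"
  define Q where "Q = (\<lambda>v. T a x - T v x)"
  have cg: "continuous_on {a..b} (\<lambda>r. T r x)"
    using sg_basic(4)[OF sg, of x] by (rule continuous_on_subset) (use ab in auto)
  have FD: "\<And>v. v \<in> {a..b} \<Longrightarrow> F v \<in> D \<and> A (F v) = Q v"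
    unfolding F_def Q_def using int_gen[OF sg gen] ab by auto
  have C0: "C 0 = 0" using C_scale[OF Clin x, of 0] by simp
  have Fa: "F a = 0" unfolding F_def by simp
  have "((\<lambda>r. C (T r x)) has_integral C (F b) - C (F a)) {a..b}"
  proof (rule fundamental_theorem_of_calculus[OF ab(2), where f="\<lambda>v. C (F v)"])
    fix u assume u: "u \<in> {a..b}"
    have u0: "u > 0" using u ab by auto
    have dF: "(F has_vector_derivative T u x) (at u within {a..b})"
      unfolding F_def by (rule integral_has_vector_derivative[OF cg u])
    have dQ: "(Q has_vector_derivative T u (A x)) (at u within {a..b})"
    proof -
      have "((\<lambda>v. T a x - T v x) has_vector_derivative 0 - - T u (A x)) (at u within {a..b})"
        by (intro has_vector_derivative_diff has_vector_derivative_const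
            has_vector_derivative_at_within[OF T_deriv[OF sg gen x u0]])
      then show ?thesis unfolding Q_def by simp
    qed
    let ?rF = "\<lambda>v. (1 / norm (v - u)) *\<^sub>R (F v - (F u + (v - u) *\<^sub>R T u x))"
    let ?rQ = "\<lambda>v. (1 / norm (v - u)) *\<^sub>R (Q v - (Q u + (v - u) *\<^sub>R T u (A x)))"
    have rF: "(?rF \<longlongrightarrow> 0) (at u within {a..b})"
      using dF unfolding has_vector_derivative_def has_derivative_within by auto
    have rQ: "(?rQ \<longlongrightarrow> 0) (at u within {a..b})"
      using dQ unfolding has_vector_derivative_def has_derivative_within by auto
    have sumlim: "((\<lambda>v. norm (?rF v) + norm (?rQ v)) \<longlongrightarrow> 0) (at u within {a..b})"
      using tendsto_add[OF tendsto_norm_zero[OF rF] tendsto_norm_zero[OF rQ]] by simp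
    have TuD: "T u x \<in> D" "A (T u x) = T u (A x)" using T_D[OF sg gen x] u0 by auto
    show "((\<lambda>v. C (F v)) has_vector_derivative C (T u x)) (at u within {a..b})"
      unfolding has_vector_derivative_def has_derivative_within
    proof
      show "bounded_linear (\<lambda>h. h *\<^sub>R C (T u x))" by (rule bounded_linear_scaleR_left)
      show "((\<lambda>v. (1 / norm (v - u)) *\<^sub>R (C (F v) - (C (F u) + (v - u) *\<^sub>R C (T u x)))) \<longlongrightarrow> 0)
          (at u within {a..b})"
      proof (rule tendsto_0_le[OF sumlim, where K="\<bar>c\<bar>"])
        have "eventually (\<lambda>v. v \<in> {a..b}) (at u within {a..b})"
          by (simp add: eventually_at_filter)
        then show "\<forall>\<^sub>F v in at u within {a..b}.
            norm ((1 / norm (v - u)) *\<^sub>R (C (F v) - (C (F u) + (v - u) *\<^sub>R C (T u x))))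
            \<le> norm (norm (?rF v) + norm (?rQ v)) * \<bar>c\<bar>"
        proof eventually_elim
          case (elim v)
          define e where "e = F v - F u - (v - u) *\<^sub>R T u x"
          have Fv: "F v \<in> D" "A (F v) = Q v" using FD elim by auto
          have Fu: "F u \<in> D" "A (F u) = Q u" using FD u by auto
          have d1: "F v - F u \<in> D" "A (F v - F u) = Q v - Q u"
            using D_diff[OF sg gen Fv(1) Fu(1)] Fv Fu by auto
          have d2: "(v - u) *\<^sub>R T u x \<in> D" "A ((v - u) *\<^sub>R T u x) = (v - u) *\<^sub>R T u (A x)"
            using D_scale[OF sg gen TuD(1)] TuD by auto
          have eD0: "e \<in> D" "A e = Q v - Q u - (v - u) *\<^sub>R T u (A x)"
            unfolding e_def using D_diff[OF sg gen d1(1) d2(1)] d1 d2 by auto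
          have eD: "e \<in> D" "A e = Q v - (Q u + (v - u) *\<^sub>R T u (A x))"
            using eD0 by (simp_all only: diff_diff_eq)
          have Ce0: "C e = C (F v) - C (F u) - (v - u) *\<^sub>R C (T u x)"
            unfolding e_def by (simp only: C_diff[OF Clin d1(1) d2(1)] C_diff[OF Clin Fv(1) Fu(1)]
              C_scale[OF Clin TuD(1)])
          have Ce: "C e = C (F v) - (C (F u) + (v - u) *\<^sub>R C (T u x))"
            using Ce0 by (simp only: diff_diff_eq)
          have eF: "e = F v - (F u + (v - u) *\<^sub>R T u x)" unfolding e_def by (simp add: algebra_simps)
          have "norm ((1 / norm (v - u)) *\<^sub>R (C (F v) - (C (F u) + (v - u) *\<^sub>R C (T u x))))
              = (1 / norm (v - u)) * norm (C e)" unfolding Ce by simp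
          also have "\<dots> \<le> (1 / norm (v - u)) * (\<bar>c\<bar> * (norm e + norm (A e)))"
          proof (rule mult_left_mono)
            have "norm (C e) \<le> c * (norm e + norm (A e))" using Cbd eD by auto
            also have "\<dots> \<le> \<bar>c\<bar> * (norm e + norm (A e))" by (intro mult_right_mono) auto
            finally show "norm (C e) \<le> \<bar>c\<bar> * (norm e + norm (A e))" .
          qed simp
          also have "\<dots> = (norm (?rF v) + norm (?rQ v)) * \<bar>c\<bar>"
          proof -
            have n1: "norm (?rF v) = (1 / norm (v - u)) * norm e" by (simp add: eF[symmetric])
            have n2: "norm (?rQ v) = (1 / norm (v - u)) * norm (A e)" by (simp add: eD(2)[symmetric])
            show ?thesis unfolding n1 n2 by (simp add: algebra_simps)
          qed
          also have "\<dots> \<le> norm (norm (?rF v) + norm (?rQ v)) * \<bar>c\<bar>"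
            by (intro mult_right_mono) auto
          finally show ?case .
        qed
      qed
    qed
  qed
  then show ?thesis unfolding Fa C0 by (simp add: F_def)
qed



lemma alg_aux: "(d::real) > 0 \<Longrightarrow> I - 2*(J/d)*J + (J/d)\<^sup>2*d = I - J\<^sup>2/d"
  by (simp add: field_simps power2_eq_square)

lemma CS_int:
  fixes h :: "real \<Rightarrow> real"
  assumes ch: "continuous_on {a..b} h" and ab: "a \<le> b"
  shows "(integral {a..b} h)\<^sup>2 \<le> (b - a) * integral {a..b} (\<lambda>r. (h r)\<^sup>2)"
proof (cases "a = b")
  case True then show ?thesis by simp
next
  case False
  with ab have ab': "a < b" by simp
  define J where "J = integral {a..b} h"
  define I where "I = integral {a..b} (\<lambda>r. (h r)\<^sup>2)"
  define m where "m = J / (b - a)"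
  have i1: "h integrable_on {a..b}" by (rule integrable_continuous_real[OF ch])
  have i2: "(\<lambda>r. (h r)\<^sup>2) integrable_on {a..b}"
    by (rule integrable_continuous_real) (intro continuous_intros ch)
  have "0 \<le> integral {a..b} (\<lambda>r. (h r - m)\<^sup>2)" by (rule integral_nonneg, rule integrable_continuous_real) (auto intro!: continuous_intros ch)
  also have "integral {a..b} (\<lambda>r. (h r - m)\<^sup>2) = integral {a..b} (\<lambda>r. (h r)\<^sup>2 - (2 * m) * h r + m\<^sup>2)"
    by (rule integral_cong) (simp add: power2_eq_square algebra_simps)
  also have "\<dots> = I - (2 * m) * J + m\<^sup>2 * (b - a)"
  proof -
    have a1: "(\<lambda>r. (2 * m) * h r) integrable_on {a..b}" by (rule integrable_continuous_real) (auto intro!: continuous_intros ch)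
    have "integral {a..b} (\<lambda>r. (h r)\<^sup>2 - (2 * m) * h r + m\<^sup>2)
        = integral {a..b} (\<lambda>r. (h r)\<^sup>2 - (2 * m) * h r) + integral {a..b} (\<lambda>r. m\<^sup>2)"
      by (rule integral_add) (auto intro: integrable_diff i2 a1)
    also have "integral {a..b} (\<lambda>r. (h r)\<^sup>2 - (2 * m) * h r) = I - integral {a..b} (\<lambda>r. (2 * m) * h r)"
      unfolding I_def by (rule integral_diff[OF i2 a1])
    also have "integral {a..b} (\<lambda>r. (2 * m) * h r) = (2 * m) * J"
      unfolding J_def by (rule integral_mult_right)
    finally show ?thesis using ab by simp
  qed
  also have "\<dots> = I - J\<^sup>2 / (b - a)" unfolding m_def using alg_aux[of "b - a" I J] ab' by simp
  finally have "J\<^sup>2 / (b - a) \<le> I" by simp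
  then show ?thesis using ab' by (simp add: J_def I_def field_simps)
qed

lemma C_cont:
  fixes C :: "'a::banach \<Rightarrow> 'b::banach"
  assumes sg: "bounded_semigroup T" and gen: "is_generator T D (\<lambda>x. - A x)"
    and Clin: "\<forall>x\<in>D. \<forall>y\<in>D. \<forall>a b. C (a *\<^sub>R x + b *\<^sub>R y) = a *\<^sub>R C x + b *\<^sub>R C y"
    and Cbd: "\<forall>x\<in>D. norm (C x) \<le> c * (norm x + norm (A x))"
    and x: "x \<in> D"
  shows "continuous_on {0..} (\<lambda>r. C (T r x))"
  unfolding continuous_on_def
proof
  fix r0 :: real assume r0: "r0 \<in> {0..}"
  have h1: "((\<lambda>r. T r x) \<longlongrightarrow> T r0 x) (at r0 within {0..})"
    using sg_basic(4)[OF sg, of x] r0 by (simp add: continuous_on_def)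
  have h2: "((\<lambda>r. T r (A x)) \<longlongrightarrow> T r0 (A x)) (at r0 within {0..})"
    using sg_basic(4)[OF sg, of "A x"] r0 by (simp add: continuous_on_def)
  have z: "((\<lambda>r. norm (T r x - T r0 x) + norm (T r (A x) - T r0 (A x))) \<longlongrightarrow> 0) (at r0 within {0..})"
    using tendsto_add[OF tendsto_norm_zero[OF LIM_zero[OF h1]] tendsto_norm_zero[OF LIM_zero[OF h2]]]
    by simp
  have "((\<lambda>r. C (T r x) - C (T r0 x)) \<longlongrightarrow> 0) (at r0 within {0..})"
  proof (rule tendsto_0_le[OF z, where K="\<bar>c\<bar>"])
    have "eventually (\<lambda>r. r \<in> {0..}) (at r0 within {0..})" by (simp add: eventually_at_filter)
    then show "\<forall>\<^sub>F r in at r0 within {0..}. norm (C (T r x) - C (T r0 x))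
        \<le> norm (norm (T r x - T r0 x) + norm (T r (A x) - T r0 (A x))) * \<bar>c\<bar>"
    proof eventually_elim
      case (elim r)
      have a: "T r x \<in> D" "A (T r x) = T r (A x)" using T_D[OF sg gen x] elim by auto
      have b: "T r0 x \<in> D" "A (T r0 x) = T r0 (A x)" using T_D[OF sg gen x] r0 by auto
      have d: "T r x - T r0 x \<in> D" "A (T r x - T r0 x) = T r (A x) - T r0 (A x)"
        using D_diff[OF sg gen a(1) b(1)] a b by auto
      have "norm (C (T r x) - C (T r0 x)) = norm (C (T r x - T r0 x))"
        using C_diff[OF Clin a(1) b(1)] by simp
      also have "\<dots> \<le> c * (norm (T r x - T r0 x) + norm (T r (A x) - T r0 (A x)))"
        using Cbd d by auto
      also have "\<dots> \<le> \<bar>c\<bar> * (norm (T r x - T r0 x) + norm (T r (A x) - T r0 (A x)))"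
        by (intro mult_right_mono) auto
      also have "\<dots> \<le> norm (norm (T r x - T r0 x) + norm (T r (A x) - T r0 (A x))) * \<bar>c\<bar>"
        by (simp add: mult.commute)
      finally show ?case .
    qed
  qed
  from tendsto_add[OF this tendsto_const[of "C (T r0 x)"]]
  show "((\<lambda>r. C (T r x)) \<longlongrightarrow> C (T r0 x)) (at r0 within {0..})" by simp
qed



definition Hk :: "real \<Rightarrow> (real \<Rightarrow> real) \<Rightarrow> real \<Rightarrow> real \<Rightarrow> real" where
  "Hk \<beta> f t r = (if 0 < t then 1 / t else 0) *
     ((if t powr (2*\<beta>) \<le> r \<and> r \<le> 2 * t powr (2*\<beta>) then 1 else 0) * f r)"

lemma Hk_meas:
  fixes f :: "real \<Rightarrow> real" and \<beta> :: real
  assumes fm[measurable]: "f \<in> borel_measurable borel"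
  shows "(\<lambda>(t, r). ennreal (Hk \<beta> f t r)) \<in> borel_measurable (lborel \<Otimes>\<^sub>M lborel)"
  unfolding Hk_def by measurable

lemma powr_inv_aux:
  fixes t e :: real assumes "t > 0" "e > 0"
  shows "(t powr e) powr (1 / e) = t"
  using assms by (simp add: powr_powr)

lemma inner_bound:
  fixes f :: "real \<Rightarrow> real"
  assumes fnn: "\<And>r. 0 \<le> f r" and beta: "\<beta> > 0"
  shows "(\<integral>\<^sup>+ t. ennreal (Hk \<beta> f t r) \<partial>lborel) \<le> ennreal (2 powr (1/(2*\<beta>)) - 1) * ennreal (f r)"
proof (cases "r \<le> 0")
  case True
  have "\<And>t. Hk \<beta> f t r = 0"
  proof -
    fix t :: real
    show "Hk \<beta> f t r = 0"
    proof (cases "0 < t")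
      case True
      then have "t powr (2*\<beta>) > 0" by simp
      then have "\<not> (t powr (2*\<beta>) \<le> r)" using \<open>r \<le> 0\<close> by linarith
      then show ?thesis by (simp add: Hk_def)
    qed (simp add: Hk_def)
  qed
  then show ?thesis by simp
next
  case False
  then have r: "r > 0" by simp
  define e where "e = 1 / (2 * \<beta>)"
  have e: "e > 0" using beta by (simp add: e_def)
  define \<alpha> where "\<alpha> = (r / 2) powr e"
  define \<gamma> where "\<gamma> = r powr e"
  have a0: "\<alpha> > 0" using r by (simp add: \<alpha>_def)
  have ag: "\<alpha> \<le> \<gamma>" unfolding \<alpha>_def \<gamma>_def by (rule powr_mono2) (use r e in auto)
  have ratio: "\<gamma> / \<alpha> = 2 powr e"
  proof -
    have "\<gamma> / \<alpha> = (r / (r / 2)) powr e" unfolding \<alpha>_def \<gamma>_def by (rule powr_divide[symmetric])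
    also have "r / (r / 2) = 2" using r by simp
    finally show ?thesis .
  qed
  have pt: "ennreal (Hk \<beta> f t r) \<le> ennreal (f r / \<alpha>) * indicator {\<alpha>..\<gamma>} t" for t
  proof (cases "0 < t \<and> t powr (2*\<beta>) \<le> r \<and> r \<le> 2 * t powr (2*\<beta>)")
    case True
    then have t: "t > 0" and c1: "t powr (2*\<beta>) \<le> r" and c2: "r / 2 \<le> t powr (2*\<beta>)" by auto
    have inv: "(t powr (2*\<beta>)) powr e = t" unfolding e_def by (rule powr_inv_aux) (use t beta in auto)
    have "(t powr (2*\<beta>)) powr e \<le> r powr e" by (rule powr_mono2) (use c1 e in auto)
    then have "t \<le> \<gamma>" unfolding \<gamma>_def inv .
    have "(r / 2) powr e \<le> (t powr (2*\<beta>)) powr e" by (rule powr_mono2) (use c2 e r in auto)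
    then have "\<alpha> \<le> t" unfolding \<alpha>_def inv .
    note \<open>t \<le> \<gamma>\<close>
    moreover have "1 / t * f r \<le> f r / \<alpha>"
    proof -
      have "1 / t \<le> 1 / \<alpha>" using \<open>\<alpha> \<le> t\<close> a0 by (simp add: frac_le)
      then have "1 / t * f r \<le> 1 / \<alpha> * f r" by (rule mult_right_mono) (rule fnn)
      then show ?thesis by simp
    qed
    ultimately have "t \<in> {\<alpha>..\<gamma>}" "1 / t * f r \<le> f r / \<alpha>" using \<open>\<alpha> \<le> t\<close> by auto
    then show ?thesis using True by (simp add: Hk_def ennreal_leI)
  next
    case False
    then have "Hk \<beta> f t r = 0" by (auto simp: Hk_def)
    then show ?thesis by simp
  qed
  have "(\<integral>\<^sup>+ t. ennreal (Hk \<beta> f t r) \<partial>lborel) \<le> (\<integral>\<^sup>+ t. ennreal (f r / \<alpha>) * indicator {\<alpha>..\<gamma>} t \<partial>lborel)"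
    by (rule nn_integral_mono) (rule pt)
  also have "\<dots> = ennreal (f r / \<alpha>) * emeasure lborel {\<alpha>..\<gamma>}"
    by (rule nn_integral_cmult_indicator) simp
  also have "\<dots> = ennreal (f r / \<alpha>) * ennreal (\<gamma> - \<alpha>)" using ag by simp
  also have "\<dots> = ennreal (f r / \<alpha> * (\<gamma> - \<alpha>))"
    using fnn[of r] a0 ag by (intro ennreal_mult[symmetric]) auto
  also have "f r / \<alpha> * (\<gamma> - \<alpha>) = (2 powr e - 1) * f r"
    using ratio a0 by (simp add: field_simps)
  also have "ennreal ((2 powr e - 1) * f r) = ennreal (2 powr (1/(2*\<beta>)) - 1) * ennreal (f r)"
  proof -
    have B0: "2 powr (1/(2*\<beta>)) - 1 \<ge> 0" using ge_one_powr_ge_zero[of 2 "1/(2*\<beta>)"] beta by simp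
    show ?thesis unfolding e_def using fnn[of r] B0 by (intro ennreal_mult) auto
  qed
  finally show ?thesis .
qed

lemma tonelli_bound:
  fixes f :: "real \<Rightarrow> real"
  assumes fm: "f \<in> borel_measurable borel" and fnn: "\<And>r. 0 \<le> f r" and beta: "\<beta> > 0"
  shows "(\<integral>\<^sup>+ t. (\<integral>\<^sup>+ r. ennreal (Hk \<beta> f t r) \<partial>lborel) \<partial>lborel)
    \<le> ennreal (2 powr (1/(2*\<beta>)) - 1) * (\<integral>\<^sup>+ r. ennreal (f r) \<partial>lborel)"
proof -
  have "(\<integral>\<^sup>+ t. (\<integral>\<^sup>+ r. ennreal (Hk \<beta> f t r) \<partial>lborel) \<partial>lborel)
      = (\<integral>\<^sup>+ r. (\<integral>\<^sup>+ t. ennreal (Hk \<beta> f t r) \<partial>lborel) \<partial>lborel)"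
    by (rule lborel_pair.Fubini'[symmetric]) (rule Hk_meas[OF fm])
  also have "\<dots> \<le> (\<integral>\<^sup>+ r. ennreal (2 powr (1/(2*\<beta>)) - 1) * ennreal (f r) \<partial>lborel)"
    by (rule nn_integral_mono) (rule inner_bound[OF fnn beta])
  also have "\<dots> = ennreal (2 powr (1/(2*\<beta>)) - 1) * (\<integral>\<^sup>+ r. ennreal (f r) \<partial>lborel)"
    by (rule nn_integral_cmult) (use fm in measurable)
  finally show ?thesis .
qed



lemma pointwise:
  fixes T :: "real \<Rightarrow> 'a::banach \<Rightarrow> 'a" and C :: "'a \<Rightarrow> 'b::banach"
  assumes sg: "bounded_semigroup T" and gen: "is_generator T D (\<lambda>x. - A x)"
    and inj: "inj_on A D"
    and Clin: "\<forall>x\<in>D. \<forall>y\<in>D. \<forall>a b. C (a *\<^sub>R x + b *\<^sub>R y) = a *\<^sub>R C x + b *\<^sub>R C y"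
    and Cbd: "\<forall>x\<in>D. norm (C x) \<le> c * (norm x + norm (A x))"
    and dpos: "\<delta> > 0" and beta: "\<beta> > 0"
    and R: "\<forall>x \<in> D \<inter> A ` D. norm (C (inv_into D A x)) \<ge> \<delta> * norm (frac_neg_pow T \<beta> x)"
    and x: "x \<in> D" and t: "t > 0"
  shows "ennreal ((norm ((t powr (- \<beta>)) *\<^sub>R
                  frac_neg_pow T \<beta> (T (2 * t powr (2 * \<beta>)) x - T (t powr (2 * \<beta>)) x)))\<^sup>2 / t)
    \<le> ennreal (1 / \<delta>\<^sup>2) * (\<integral>\<^sup>+ r. ennreal (Hk \<beta> (\<lambda>r. indicator {0..} r * (norm (C (T r x)))\<^sup>2) t r) \<partial>lborel)"
proof -
  define s where "s = t powr (2 * \<beta>)"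
  have s0: "s > 0" using t by (simp add: s_def)
  define v where "v = T (2 * s) x - T s x"
  define w where "w = integral {s..2 * s} (\<lambda>r. T r (- x))"
  define f where "f = (\<lambda>r. (norm (C (T r x)))\<^sup>2)"
  define J where "J = integral {s..2 * s} (\<lambda>r. norm (C (T r x)))"
  define I where "I = integral {s..2 * s} f"
  have mx: "- x \<in> D" using D_scale[OF sg gen x, of "-1"] by simp
  have wD: "w \<in> D" "A w = T s (- x) - T (2 * s) (- x)"
    unfolding w_def using int_gen[OF sg gen, of s "2 * s" "- x"] s0 by auto
  have neg: "\<And>r. r \<ge> 0 \<Longrightarrow> T r (- x) = - T r x"
    using sg_basic(1)[OF sg] by (simp add: linear_simps)
  have Aw: "A w = v" unfolding wD(2) v_def using neg s0 by simp
  have vD: "v \<in> D" unfolding v_def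
    using D_diff(1)[OF sg gen T_D(1)[OF sg gen x] T_D(1)[OF sg gen x]] s0 by simp
  have vA: "v \<in> A ` D" using Aw wD by blast
  have inv: "inv_into D A v = w" using inv_into_f_f[OF inj wD(1)] by (simp add: Aw)
  have R1: "\<delta> * norm (frac_neg_pow T \<beta> v) \<le> norm (C w)" using R vD vA inv by auto
  have cC: "continuous_on {0..} (\<lambda>r. C (T r x))" by (rule C_cont[OF sg gen Clin Cbd x])
  have cC': "continuous_on {s..2 * s} (\<lambda>r. C (T r x))"
    by (rule continuous_on_subset[OF cC]) (use s0 in auto)
  have hi: "((\<lambda>r. C (T r (- x))) has_integral C w) {s..2 * s}"
    unfolding w_def by (rule C_int[OF sg gen Clin Cbd mx]) (use s0 in auto)
  have nCw: "norm (C w) \<le> J"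
  proof -
    have "norm (integral {s..2 * s} (\<lambda>r. C (T r (- x)))) \<le> integral {s..2 * s} (\<lambda>r. norm (C (T r x)))"
    proof (rule integral_norm_bound_integral)
      show "(\<lambda>r. C (T r (- x))) integrable_on {s..2 * s}" using hi by blast
      show "(\<lambda>r. norm (C (T r x))) integrable_on {s..2 * s}"
        by (rule integrable_continuous_real) (intro continuous_intros cC')
      fix r assume r: "r \<in> {s..2 * s}"
      have "T r x \<in> D" using T_D[OF sg gen x] r s0 by auto
      then have "C (T r (- x)) = - C (T r x)"
        using neg[of r] r s0 C_scale[OF Clin, of "T r x" "-1"] by simp
      then show "norm (C (T r (- x))) \<le> norm (C (T r x))" by simp
    qed
    then show ?thesis using integral_unique[OF hi] by (simp add: J_def)
  qed
  have CS: "J\<^sup>2 \<le> s * I"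
    using CS_int[of s "2 * s" "\<lambda>r. norm (C (T r x))"] cC' s0
    by (simp add: J_def I_def f_def continuous_intros)
  have J0: "0 \<le> J" using nCw norm_ge_zero order_trans by blast
  have nv: "(norm (frac_neg_pow T \<beta> v))\<^sup>2 \<le> s * I / \<delta>\<^sup>2"
  proof -
    have "norm (frac_neg_pow T \<beta> v) \<le> J / \<delta>" using R1 nCw dpos by (simp add: field_simps)
    then have "(norm (frac_neg_pow T \<beta> v))\<^sup>2 \<le> (J / \<delta>)\<^sup>2" by (intro power_mono) auto
    also have "\<dots> = J\<^sup>2 / \<delta>\<^sup>2" by (simp add: power_divide)
    also have "\<dots> \<le> s * I / \<delta>\<^sup>2" using CS dpos by (intro divide_right_mono) auto
    finally show ?thesis .
  qed
  have pw: "(t powr (- \<beta>))\<^sup>2 * s = 1"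
  proof -
    have "(t powr (- \<beta>))\<^sup>2 * s = t powr (- \<beta>) * t powr (- \<beta>) * t powr (2 * \<beta>)"
      by (simp add: s_def power2_eq_square)
    also have "\<dots> = t powr (- \<beta> + - \<beta> + 2 * \<beta>)" by (simp only: powr_add)
    also have "\<dots> = 1" using t by simp
    finally show ?thesis .
  qed
  have I0: "0 \<le> I" unfolding I_def f_def
    by (rule integral_nonneg, rule integrable_continuous_real) (auto intro!: continuous_intros cC')
  have real_bound: "(norm ((t powr (- \<beta>)) *\<^sub>R frac_neg_pow T \<beta> v))\<^sup>2 / t \<le> (1 / \<delta>\<^sup>2) * ((1 / t) * I)"
  proof -
    have "(norm ((t powr (- \<beta>)) *\<^sub>R frac_neg_pow T \<beta> v))\<^sup>2 = (t powr (- \<beta>))\<^sup>2 * (norm (frac_neg_pow T \<beta> v))\<^sup>2"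
      by (simp add: power_mult_distrib)
    also have "\<dots> \<le> (t powr (- \<beta>))\<^sup>2 * (s * I / \<delta>\<^sup>2)" by (intro mult_left_mono nv) auto
    also have "\<dots> = I / \<delta>\<^sup>2" using pw by (simp add: field_simps)
    finally show ?thesis using t by (simp add: divide_right_mono field_simps)
  qed
  define ft where "ft = (\<lambda>r. indicator {0..} r * (norm (C (T r x)))\<^sup>2 :: real)"
  have Hk_eq: "\<And>r. ennreal (Hk \<beta> ft t r) = ennreal (1 / t) * ennreal (indicator {s..2 * s} r * f r)"
  proof -
    fix r :: real
    have "Hk \<beta> ft t r = (1 / t) * (indicator {s..2 * s} r * f r)"
      using t s0 by (auto simp: Hk_def ft_def f_def s_def indicator_def)
    moreover have "0 \<le> indicator {s..2 * s} r * f r" by (simp add: f_def)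
    moreover have "ennreal ((1 / t) * (indicator {s..2 * s} r * f r))
        = ennreal (1 / t) * ennreal (indicator {s..2 * s} r * f r)"
      by (rule ennreal_mult) (use t \<open>0 \<le> indicator {s..2 * s} r * f r\<close> in auto)
    ultimately show "ennreal (Hk \<beta> ft t r) = ennreal (1 / t) * ennreal (indicator {s..2 * s} r * f r)"
      by metis
  qed
  have fmeas: "(\<lambda>r. ennreal (indicator {s..2 * s} r * f r)) \<in> borel_measurable lborel"
  proof -
    have "(\<lambda>r. indicator {s..2 * s} r *\<^sub>R f r) \<in> borel_measurable borel"
      by (rule borel_measurable_continuous_on_indicator) (auto simp: f_def intro!: continuous_intros cC')
    then show ?thesis by simp
  qed
  have fI: "(f has_integral I) {s..2 * s}" unfolding I_def f_def
    by (rule integrable_integral, rule integrable_continuous_real) (auto intro!: continuous_intros cC')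
  have inner: "(\<integral>\<^sup>+ r. ennreal (Hk \<beta> ft t r) \<partial>lborel) = ennreal (1 / t) * ennreal I"
  proof -
    have "(\<integral>\<^sup>+ r. ennreal (Hk \<beta> ft t r) \<partial>lborel) = (\<integral>\<^sup>+ r. ennreal (1 / t) * ennreal (indicator {s..2 * s} r * f r) \<partial>lborel)"
      by (simp only: Hk_eq)
    also have "\<dots> = ennreal (1 / t) * (\<integral>\<^sup>+ r. ennreal (indicator {s..2 * s} r * f r) \<partial>lborel)"
      by (rule nn_integral_cmult[OF fmeas])
    also have "(\<integral>\<^sup>+ r. ennreal (indicator {s..2 * s} r * f r) \<partial>lborel) = ennreal I"
      by (rule nn_integral_has_integral_lebesgue[OF _ fI]) (simp add: f_def)
    finally show ?thesis .
  qed
  have "ennreal ((norm ((t powr (- \<beta>)) *\<^sub>R frac_neg_pow T \<beta> v))\<^sup>2 / t) \<le> ennreal ((1 / \<delta>\<^sup>2) * ((1 / t) * I))"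
    by (rule ennreal_leI[OF real_bound])
  also have "\<dots> = ennreal (1 / \<delta>\<^sup>2) * (ennreal (1 / t) * ennreal I)"
  proof -
    have "ennreal ((1 / t) * I) = ennreal (1 / t) * ennreal I"
      by (rule ennreal_mult) (use t I0 in auto)
    moreover have "ennreal ((1 / \<delta>\<^sup>2) * ((1 / t) * I)) = ennreal (1 / \<delta>\<^sup>2) * ennreal ((1 / t) * I)"
      by (rule ennreal_mult) (use t I0 in auto)
    ultimately show ?thesis by simp
  qed
  finally show ?thesis unfolding inner[unfolded ft_def, symmetric] by (simp add: v_def s_def)
qed



theorem theorem4p3:
  fixes T :: "real \<Rightarrow> 'a::banach \<Rightarrow> 'a"
    and D :: "'a set"
    and A :: "'a \<Rightarrow> 'a"
    and C :: "'a \<Rightarrow> 'b::banach"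
    and \<beta> K \<delta> :: real
  assumes sg: "bounded_semigroup T"
    and gen: "is_generator T D (\<lambda>x. - A x)"
    and inj: "inj_on A D"
    and dense: "closure (A ` D) = UNIV"
    and Cb: "graph_bounded D A C"
    and beta: "0 < \<beta>" "\<beta> < 1"
    and Kpos: "K > 0" and dpos: "\<delta> > 0"
    and SQ: "\<forall>x. ennreal ((norm x)\<^sup>2) \<le> ennreal (K\<^sup>2) *
              (\<integral>\<^sup>+ t\<in>{0<..}. ennreal ((norm ((t powr (- \<beta>)) *\<^sub>R
                  frac_neg_pow T \<beta> (T (2 * t powr (2 * \<beta>)) x - T (t powr (2 * \<beta>)) x)))\<^sup>2 / t)
               \<partial>lborel)"
    and R: "\<forall>x \<in> D \<inter> A ` D. norm (C (inv_into D A x)) \<ge> \<delta> * norm (frac_neg_pow T \<beta> x)"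
  shows "\<exists>m>0. \<forall>x \<in> D \<inter> A ` D.
           ennreal (m\<^sup>2 * (norm x)\<^sup>2) \<le> (\<integral>\<^sup>+ t\<in>{0..}. ennreal ((norm (C (T t x)))\<^sup>2) \<partial>lborel)"
proof -
  from Cb obtain c where Clin: "\<forall>x\<in>D. \<forall>y\<in>D. \<forall>a b. C (a *\<^sub>R x + b *\<^sub>R y) = a *\<^sub>R C x + b *\<^sub>R C y"
    and Cbd: "\<forall>x\<in>D. norm (C x) \<le> c * (norm x + norm (A x))"
    unfolding graph_bounded_def by blast
  define B where "B = 2 powr (1 / (2 * \<beta>)) - 1"
  have B0: "B > 0"
  proof -
    have "(2::real) powr 0 < 2 powr (1 / (2 * \<beta>))" by (rule powr_less_mono) (use beta in auto)
    then show ?thesis by (simp add: B_def)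
  qed
  define m where "m = \<delta> / (K * sqrt B)"
  have m0: "m > 0" using dpos Kpos B0 by (simp add: m_def)
  have mK: "m\<^sup>2 * (K\<^sup>2 * (1 / \<delta>\<^sup>2) * B) = 1"
    using dpos Kpos B0 by (simp add: m_def power_divide power_mult_distrib field_simps)
  show ?thesis
  proof (intro exI[of _ m] conjI ballI)
    show "m > 0" by (rule m0)
    fix x assume xx: "x \<in> D \<inter> A ` D"
    then have x: "x \<in> D" by blast
    define ft where "ft = (\<lambda>r. indicator {0..} r * (norm (C (T r x)))\<^sup>2 :: real)"
    have cC: "continuous_on {0..} (\<lambda>r. C (T r x))" by (rule C_cont[OF sg gen Clin Cbd x])
    have fm: "ft \<in> borel_measurable borel"
    proof -
      have "(\<lambda>r. indicator {0..} r *\<^sub>R (norm (C (T r x)))\<^sup>2) \<in> borel_measurable borel"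
        by (rule borel_measurable_continuous_on_indicator) (auto intro!: continuous_intros cC)
      then show ?thesis by (simp add: ft_def)
    qed
    have fnn: "\<And>r. 0 \<le> ft r" by (simp add: ft_def)
    let ?G = "\<lambda>t. ennreal ((norm ((t powr (- \<beta>)) *\<^sub>R
                  frac_neg_pow T \<beta> (T (2 * t powr (2 * \<beta>)) x - T (t powr (2 * \<beta>)) x)))\<^sup>2 / t)"
    let ?H = "\<lambda>t. \<integral>\<^sup>+ r. ennreal (Hk \<beta> ft t r) \<partial>lborel"
    let ?I = "\<integral>\<^sup>+ t\<in>{0..}. ennreal ((norm (C (T t x)))\<^sup>2) \<partial>lborel"
    have s1: "ennreal ((norm x)\<^sup>2) \<le> ennreal (K\<^sup>2) * (\<integral>\<^sup>+ t\<in>{0<..}. ?G t \<partial>lborel)"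
      using SQ by blast
    have s2: "(\<integral>\<^sup>+ t\<in>{0<..}. ?G t \<partial>lborel) \<le> (\<integral>\<^sup>+ t. ennreal (1 / \<delta>\<^sup>2) * ?H t \<partial>lborel)"
    proof (rule nn_integral_mono)
      fix t :: real
      show "?G t * indicator {0<..} t \<le> ennreal (1 / \<delta>\<^sup>2) * ?H t"
      proof (cases "t > 0")
        case True
        then show ?thesis
          using pointwise[OF sg gen inj Clin Cbd dpos beta(1) R x True] by (simp add: ft_def)
      qed simp
    qed
    have s3: "(\<integral>\<^sup>+ t. ennreal (1 / \<delta>\<^sup>2) * ?H t \<partial>lborel) = ennreal (1 / \<delta>\<^sup>2) * (\<integral>\<^sup>+ t. ?H t \<partial>lborel)"
      by (rule nn_integral_cmult) (rule lborel.borel_measurable_nn_integral[OF Hk_meas[OF fm]])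
    have s4: "(\<integral>\<^sup>+ t. ?H t \<partial>lborel) \<le> ennreal B * (\<integral>\<^sup>+ r. ennreal (ft r) \<partial>lborel)"
      unfolding B_def by (rule tonelli_bound[OF fm fnn beta(1)])
    have s5: "(\<integral>\<^sup>+ r. ennreal (ft r) \<partial>lborel) = ?I"
      by (rule nn_integral_cong) (auto simp: ft_def indicator_def)
    have "ennreal ((norm x)\<^sup>2) \<le> ennreal (K\<^sup>2) * (ennreal (1 / \<delta>\<^sup>2) * (ennreal B * ?I))"
    proof -
      have "(\<integral>\<^sup>+ t\<in>{0<..}. ?G t \<partial>lborel) \<le> ennreal (1 / \<delta>\<^sup>2) * (ennreal B * ?I)"
        using s2 s3 s4 s5 by (metis (no_types, lifting) dual_order.trans mult_left_mono zero_le)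
      then show ?thesis using s1 by (meson dual_order.trans mult_left_mono zero_le)
    qed
    also have "\<dots> = ennreal (K\<^sup>2 * (1 / \<delta>\<^sup>2) * B) * ?I"
    proof -
      have e1: "ennreal (K\<^sup>2 * (1 / \<delta>\<^sup>2)) = ennreal (K\<^sup>2) * ennreal (1 / \<delta>\<^sup>2)"
        by (rule ennreal_mult) auto
      have e2: "ennreal (K\<^sup>2 * (1 / \<delta>\<^sup>2) * B) = ennreal (K\<^sup>2 * (1 / \<delta>\<^sup>2)) * ennreal B"
        by (rule ennreal_mult) (use B0 in auto)
      show ?thesis unfolding e2 e1 by (simp only: mult.assoc)
    qed
    finally have main: "ennreal ((norm x)\<^sup>2) \<le> ennreal (K\<^sup>2 * (1 / \<delta>\<^sup>2) * B) * ?I" .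
    have "ennreal (m\<^sup>2 * (norm x)\<^sup>2) = ennreal (m\<^sup>2) * ennreal ((norm x)\<^sup>2)"
      by (rule ennreal_mult) auto
    also have "\<dots> \<le> ennreal (m\<^sup>2) * (ennreal (K\<^sup>2 * (1 / \<delta>\<^sup>2) * B) * ?I)"
      by (rule mult_left_mono[OF main]) simp
    also have "\<dots> = ennreal (m\<^sup>2 * (K\<^sup>2 * (1 / \<delta>\<^sup>2) * B)) * ?I"
    proof -
      have e3: "ennreal (m\<^sup>2 * (K\<^sup>2 * (1 / \<delta>\<^sup>2) * B)) = ennreal (m\<^sup>2) * ennreal (K\<^sup>2 * (1 / \<delta>\<^sup>2) * B)"
        by (rule ennreal_mult) (use B0 in auto)
      show ?thesis unfolding e3 by (simp only: mult.assoc)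
    qed
    also have "\<dots> = ?I" unfolding mK by simp
    finally show "ennreal (m\<^sup>2 * (norm x)\<^sup>2) \<le> ?I" .
  qed
qed

end
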